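(* Let $n\ge2r\ge4$. If $k>n-r$, then there is no graph $H$ with $\mathsf{TJ}_k(H)\cong J(n,r)$; that is, $k\notin\mathcal{K}^{\mathsf{TJ}}(J(n,r))$.
   Context: All graphs are finite, simple, undirected. A $k$-clique of a graph $H$ is a set of $k$ pairwise adjacent vertices. For a graph $H$ and integer $k\ge1$, the Token Jumping graph $\mathsf{TJ}_k(H)$ has as vertices the $k$-cliques of $H$, and two $k$-cliques $A,B$ are adjacent iff $|A\cap B|=k-1$. $\mathcal{K}^{\mathsf{TJ}}(G)=\{k\ge1:\ \exists H,\ \mathsf{TJ}_k(H)\cong G\}$. The Johnson graph $J(n,r)$ has as vertices the $r$-subsets of $\{1,\dots,n\}$, two being adjacent iff their intersection has size $r-1$. *)

theory Defs
  imports Main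
begin

definition simple_graph :: "'a set \<Rightarrow> ('a \<Rightarrow> 'a \<Rightarrow> bool) \<Rightarrow> bool" where
  "simple_graph V E \<longleftrightarrow> finite V \<and> (\<forall>x y. E x y \<longrightarrow> x \<in> V \<and> y \<in> V)
     \<and> (\<forall>x y. E x y \<longrightarrow> E y x) \<and> (\<forall>x. \<not> E x x)"

definition cliques :: "'a set \<Rightarrow> ('a \<Rightarrow> 'a \<Rightarrow> bool) \<Rightarrow> nat \<Rightarrow> 'a set set" where
  "cliques V E k = {A. A \<subseteq> V \<and> card A = k \<and> (\<forall>x\<in>A. \<forall>y\<in>A. x \<noteq> y \<longrightarrow> E x y)}"

definition TJ_verts :: "'a set \<Rightarrow> ('a \<Rightarrow> 'a \<Rightarrow> bool) \<Rightarrow> nat \<Rightarrow> 'a set set" where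
  "TJ_verts V E k = cliques V E k"

definition TJ_adj :: "'a set \<Rightarrow> ('a \<Rightarrow> 'a \<Rightarrow> bool) \<Rightarrow> nat \<Rightarrow> 'a set \<Rightarrow> 'a set \<Rightarrow> bool" where
  "TJ_adj V E k A B \<longleftrightarrow> A \<in> cliques V E k \<and> B \<in> cliques V E k \<and> card (A \<inter> B) = k - 1"

definition johnson_verts :: "nat \<Rightarrow> nat \<Rightarrow> nat set set" where
  "johnson_verts n r = {A. A \<subseteq> {1..n} \<and> card A = r}"

definition johnson_adj :: "nat \<Rightarrow> nat \<Rightarrow> nat set \<Rightarrow> nat set \<Rightarrow> bool" where
  "johnson_adj n r A B \<longleftrightarrow> A \<in> johnson_verts n r \<and> B \<in> johnson_verts n r \<and> card (A \<inter> B) = r - 1"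

definition graph_iso :: "'a set \<Rightarrow> ('a \<Rightarrow> 'a \<Rightarrow> bool) \<Rightarrow> 'b set \<Rightarrow> ('b \<Rightarrow> 'b \<Rightarrow> bool) \<Rightarrow> bool" where
  "graph_iso V1 E1 V2 E2 \<longleftrightarrow> (\<exists>f. bij_betw f V1 V2 \<and> (\<forall>x\<in>V1. \<forall>y\<in>V1. E1 x y \<longleftrightarrow> E2 (f x) (f y)))"

end

theory Submission imports Defs begin

lemma tj_common:
  assumes sg: "simple_graph V E"
    and ab: "TJ_adj V E k A B" and aw: "TJ_adj V E k A W" and bw: "TJ_adj V E k B W"
    and k: "k \<ge> 1"
  shows "(\<exists>z. z \<in> V - (A \<union> B) \<and> W = insert z (A \<inter> B))
     \<or> ((\<exists>s\<in>A \<inter> B. W = (A \<union> B) - {s}) \<and> A \<union> B \<in> cliques V E (k+1))"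
proof -
  have A: "A \<subseteq> V" "card A = k" "\<forall>x\<in>A. \<forall>y\<in>A. x \<noteq> y \<longrightarrow> E x y"
    using ab unfolding TJ_adj_def cliques_def by auto
  have B: "B \<subseteq> V" "card B = k" "\<forall>x\<in>B. \<forall>y\<in>B. x \<noteq> y \<longrightarrow> E x y"
    using ab unfolding TJ_adj_def cliques_def by auto
  have Wc: "W \<subseteq> V" "card W = k" "\<forall>x\<in>W. \<forall>y\<in>W. x \<noteq> y \<longrightarrow> E x y"
    using aw unfolding TJ_adj_def cliques_def by auto
  have fA: "finite A" using A(2) k by (intro card_ge_0_finite) simp
  have fB: "finite B" using B(2) k by (intro card_ge_0_finite) simp
  have fW: "finite W" using Wc(2) k by (intro card_ge_0_finite) simp
  have iAB: "card (A \<inter> B) = k - 1" using ab unfolding TJ_adj_def by simp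
  have iAW: "card (A \<inter> W) = k - 1" using aw unfolding TJ_adj_def by simp
  have iBW: "card (B \<inter> W) = k - 1" using bw unfolding TJ_adj_def by simp
  have uAB0: "card A + card B = card (A \<union> B) + card (A \<inter> B)" by (rule card_Un_Int[OF fA fB])
  have uAB: "card (A \<union> B) = k + 1"
    using uAB0 A(2) B(2) iAB k by linarith
  show ?thesis
  proof (cases "A \<inter> B \<subseteq> W")
    case True
    have e1: "A \<inter> W = A \<inter> B"
      using True iAB iAW fA by (intro card_subset_eq[symmetric]) auto
    have e2: "B \<inter> W = A \<inter> B"
      using True iAB iBW fB by (intro card_subset_eq[symmetric]) auto
    have "card (W - A \<inter> B) = 1"
      using True Wc(2) iAB fW k by (simp add: card_Diff_subset finite_subset)
    then obtain z where z: "W - A \<inter> B = {z}" using card_1_singletonE by blast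
    have "z \<notin> A" "z \<notin> B" "z \<in> V" using z e1 e2 Wc(1) by blast+
    moreover have "W = insert z (A \<inter> B)" using z True by blast
    ultimately show ?thesis by blast
  next
    case False
    then obtain s where s: "s \<in> A \<inter> B" "s \<notin> W" by blast
    have cA: "card (A - {s}) = k - 1" using A(2) s by simp
    have cB: "card (B - {s}) = k - 1" using B(2) s by simp
    have e1: "A \<inter> W = A - {s}"
      using s cA iAW fA by (intro card_subset_eq) auto
    have e2: "B \<inter> W = B - {s}"
      using s cB iBW fB by (intro card_subset_eq) auto
    have sub: "(A \<union> B) - {s} \<subseteq> W" using e1 e2 by blast
    have "card ((A \<union> B) - {s}) = k" using uAB s by (simp add: card_Diff_singleton)
    hence W: "W = (A \<union> B) - {s}"
      using card_subset_eq[OF fW sub] Wc(2) by simp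
    have cl: "\<forall>x\<in>A \<union> B. \<forall>y\<in>A \<union> B. x \<noteq> y \<longrightarrow> E x y"
    proof (intro ballI impI)
      fix x y assume xy: "x \<in> A \<union> B" "y \<in> A \<union> B" "x \<noteq> y"
      show "E x y"
      proof (cases "x \<in> W \<and> y \<in> W")
        case True thus ?thesis using Wc(3) xy by blast
      next
        case False
        hence "x = s \<or> y = s" using W xy by blast
        thus ?thesis using A(3) B(3) xy s by blast
      qed
    qed
    have "A \<union> B \<in> cliques V E (k+1)" unfolding cliques_def using A B uAB cl by blast
    thus ?thesis using W s by blast
  qed
qed


definition nb :: "('b \<Rightarrow> 'b \<Rightarrow> bool) \<Rightarrow> 'b \<Rightarrow> 'b \<Rightarrow> 'b set" where
  "nb adj A B = {W. adj A W \<and> adj B W}"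

definition isclq :: "('b \<Rightarrow> 'b \<Rightarrow> bool) \<Rightarrow> 'b set \<Rightarrow> bool" where
  "isclq adj C \<longleftrightarrow> (\<forall>x\<in>C. \<forall>y\<in>C. x \<noteq> y \<longrightarrow> adj x y)"

lemma tj_basic:
  assumes "TJ_adj V E k A B" "k \<ge> 1"
  shows "finite A" "finite B" "card A = k" "card B = k" "card (A \<inter> B) = k - 1"
    "card (A \<union> B) = k + 1"
proof -
  have c: "card A = k" "card B = k" "card (A \<inter> B) = k - 1"
    using assms unfolding TJ_adj_def cliques_def by auto
  thus "finite A" "finite B" using assms card.infinite by fastforce+
  thus "card A = k" "card B = k" "card (A \<inter> B) = k - 1" "card (A \<union> B) = k + 1"
    using c card_Un_Int[of A B] assms by auto
qed

lemma types_nonadj: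
  assumes "TJ_adj V E k A B" "k \<ge> 1" "z \<notin> A \<union> B" "s \<in> A \<inter> B"
  shows "\<not> TJ_adj V E k (insert z (A \<inter> B)) ((A \<union> B) - {s})"
proof
  assume "TJ_adj V E k (insert z (A \<inter> B)) ((A \<union> B) - {s})"
  hence c: "card (insert z (A \<inter> B) \<inter> ((A \<union> B) - {s})) = k - 1"
    unfolding TJ_adj_def by blast
  have "insert z (A \<inter> B) \<inter> ((A \<union> B) - {s}) = (A \<inter> B) - {s}" using assms by blast
  moreover have "card ((A \<inter> B) - {s}) = k - 2"
    using tj_basic[OF assms(1,2)] assms(4) by (simp add: card_Diff_singleton)
  moreover have "k - 1 \<ge> 1"
    using tj_basic[OF assms(1,2)] assms(4)
    by (metis One_nat_def Suc_leI card_gt_0_iff empty_iff finite_Int)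
  ultimately show False using c by simp
qed

lemma type1_not_type2:
  assumes "z \<notin> A \<union> B" "s \<in> A \<inter> B"
  shows "insert z (A \<inter> B) \<noteq> (A \<union> B) - {s}"
  using assms by blast

lemma clique_bound:
  assumes sg: "simple_graph V E" and ab: "TJ_adj V E k A B" and k: "k \<ge> 1"
    and C: "C \<subseteq> nb (TJ_adj V E k) A B" "isclq (TJ_adj V E k) C"
  shows "card C \<le> card (V - (A \<union> B)) \<or> card C \<le> card (A \<inter> B)"
proof -
  have fV: "finite V" using sg unfolding simple_graph_def by blast
  have fAB: "finite (A \<inter> B)" using tj_basic[OF ab k] by simp
  have ty: "\<And>W. W \<in> C \<Longrightarrow> (\<exists>z. z \<in> V - (A \<union> B) \<and> W = insert z (A \<inter> B))
     \<or> (\<exists>s\<in>A \<inter> B. W = (A \<union> B) - {s})"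
  proof -
    fix W assume "W \<in> C"
    hence h1: "TJ_adj V E k A W" and h2: "TJ_adj V E k B W" using C(1) unfolding nb_def by auto
    show "?thesis W" using tj_common[OF sg ab h1 h2 k] by blast
  qed
  show ?thesis
  proof (cases "\<forall>W\<in>C. \<exists>z. z \<in> V - (A \<union> B) \<and> W = insert z (A \<inter> B)")
    case True
    hence "C \<subseteq> (\<lambda>z. insert z (A \<inter> B)) ` (V - (A \<union> B))" by blast
    hence "card C \<le> card (V - (A \<union> B))"
      using fV by (meson card_image_le finite_Diff surj_card_le)
    thus ?thesis by blast
  next
    case False
    then obtain W0 where W0: "W0 \<in> C" "\<not> (\<exists>z. z \<in> V - (A \<union> B) \<and> W0 = insert z (A \<inter> B))"
      by blast
    then obtain s0 where s0: "s0 \<in> A \<inter> B" "W0 = (A \<union> B) - {s0}" using ty by blast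
    have "C \<subseteq> (\<lambda>s. (A \<union> B) - {s}) ` (A \<inter> B)"
    proof
      fix W assume W: "W \<in> C"
      show "W \<in> (\<lambda>s. (A \<union> B) - {s}) ` (A \<inter> B)"
      proof (cases "W = W0")
        case True thus ?thesis using s0 by blast
      next
        case False
        hence adj: "TJ_adj V E k W W0" using C(2) W W0(1) unfolding isclq_def by blast
        have "\<not> (\<exists>z. z \<in> V - (A \<union> B) \<and> W = insert z (A \<inter> B))"
          using types_nonadj[OF ab k _ s0(1)] adj s0(2) by blast
        thus ?thesis using ty[OF W] by blast
      qed
    qed
    hence "card C \<le> card (A \<inter> B)"
      using fAB by (meson surj_card_le)
    thus ?thesis by blast
  qed
qed

lemma big_clique:
  assumes sg: "simple_graph V E" and ab: "TJ_adj V E k A B" and k: "k \<ge> 1"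
    and W: "W1 \<in> nb (TJ_adj V E k) A B" "W2 \<in> nb (TJ_adj V E k) A B" "W1 \<noteq> W2"
      "\<not> TJ_adj V E k W1 W2"
  shows "\<exists>C. C \<subseteq> nb (TJ_adj V E k) A B \<and> isclq (TJ_adj V E k) C \<and> card C = k - 1"
proof -
  note bs = tj_basic[OF ab k]
  have ty: "\<And>W. W \<in> nb (TJ_adj V E k) A B \<Longrightarrow> (\<exists>z. z \<in> V - (A \<union> B) \<and> W = insert z (A \<inter> B))
     \<or> ((\<exists>s\<in>A \<inter> B. W = (A \<union> B) - {s}) \<and> A \<union> B \<in> cliques V E (k+1))"
  proof -
    fix W assume "W \<in> nb (TJ_adj V E k) A B"
    hence h1: "TJ_adj V E k A W" and h2: "TJ_adj V E k B W" unfolding nb_def by auto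
    show "?thesis W" by (rule tj_common[OF sg ab h1 h2 k])
  qed
  have T: "A \<union> B \<in> cliques V E (k+1)"
  proof (rule ccontr)
    assume nT: "A \<union> B \<notin> cliques V E (k+1)"
    obtain z1 where z1: "z1 \<in> V - (A \<union> B)" "W1 = insert z1 (A \<inter> B)" using ty[OF W(1)] nT by blast
    obtain z2 where z2: "z2 \<in> V - (A \<union> B)" "W2 = insert z2 (A \<inter> B)" using ty[OF W(2)] nT by blast
    have "W1 \<inter> W2 = A \<inter> B" using z1 z2 W(3) by blast
    moreover have "W1 \<in> cliques V E k" "W2 \<in> cliques V E k"
      using W(1,2) unfolding nb_def TJ_adj_def by auto
    ultimately have "TJ_adj V E k W1 W2" unfolding TJ_adj_def using bs by simp
    thus False using W(4) by blast
  qed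
  have Tc: "A \<union> B \<subseteq> V" "\<forall>x\<in>A \<union> B. \<forall>y\<in>A \<union> B. x \<noteq> y \<longrightarrow> E x y"
    using T unfolding cliques_def by auto
  have fU: "finite (A \<union> B)" using bs by simp
  define C where "C = (\<lambda>s. (A \<union> B) - {s}) ` (A \<inter> B)"
  have mem: "(A \<union> B) - {s} \<in> cliques V E k" if "s \<in> A \<inter> B" for s
    using Tc bs that unfolding cliques_def by (auto simp: card_Diff_singleton)
  have "C \<subseteq> nb (TJ_adj V E k) A B"
  proof
    fix W assume "W \<in> C"
    then obtain s where s: "s \<in> A \<inter> B" "W = (A \<union> B) - {s}" unfolding C_def by blast
    have "A \<inter> W = A - {s}" "B \<inter> W = B - {s}" using s by auto
    moreover have "card (A - {s}) = k - 1" "card (B - {s}) = k - 1" using s bs by auto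
    moreover have "A \<in> cliques V E k" "B \<in> cliques V E k" using ab unfolding TJ_adj_def by auto
    ultimately show "W \<in> nb (TJ_adj V E k) A B"
      unfolding nb_def TJ_adj_def using mem[OF s(1)] s(2) by auto
  qed
  moreover have "isclq (TJ_adj V E k) C"
    unfolding isclq_def
  proof (intro ballI impI)
    fix X Y assume X: "X \<in> C" and Y: "Y \<in> C" and XY: "X \<noteq> Y"
    obtain s where s: "s \<in> A \<inter> B" "X = (A \<union> B) - {s}" using X unfolding C_def by blast
    obtain t where t: "t \<in> A \<inter> B" "Y = (A \<union> B) - {t}" using Y unfolding C_def by blast
    have st: "s \<noteq> t" using XY s t by blast
    have "X \<inter> Y = (A \<union> B) - {s, t}" using s t by blast
    moreover have "card ((A \<union> B) - {s, t}) = k - 1"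
      using s t st bs fU by (simp add: card_Diff_subset)
    ultimately show "TJ_adj V E k X Y" unfolding TJ_adj_def using mem s t by simp
  qed
  moreover have "card C = k - 1"
  proof -
    have "inj_on (\<lambda>s. (A \<union> B) - {s}) (A \<inter> B)" unfolding inj_on_def by blast
    thus ?thesis unfolding C_def using bs by (simp add: card_image)
  qed
  ultimately show ?thesis by blast
qed


lemma johnson_as_tj1:
  "johnson_verts n r = TJ_verts {1..n} (\<lambda>x y. x \<in> {1..n} \<and> y \<in> {1..n} \<and> x \<noteq> y) r"
  unfolding johnson_verts_def TJ_verts_def cliques_def by blast

lemma johnson_as_tj2:
  "johnson_adj n r = TJ_adj {1..n} (\<lambda>x y. x \<in> {1..n} \<and> y \<in> {1..n} \<and> x \<noteq> y) r"
  apply (intro ext)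
  unfolding johnson_adj_def TJ_adj_def
  using johnson_as_tj1[of n r] unfolding TJ_verts_def by simp

lemma johnson_as_tj3:
  "simple_graph {1..n} (\<lambda>x y. x \<in> {1..(n::nat)} \<and> y \<in> {1..n} \<and> x \<noteq> y)"
  unfolding simple_graph_def by simp

lemmas johnson_as_tj = johnson_as_tj1 johnson_as_tj2 johnson_as_tj3

lemma johnson_bound:
  assumes "johnson_adj n r X Y" "r \<ge> 1" "2 * r \<le> n"
    "C \<subseteq> nb (johnson_adj n r) X Y" "isclq (johnson_adj n r) C"
  shows "card C \<le> n - r - 1"
proof -
  let ?E = "\<lambda>x y. x \<in> {1..n} \<and> y \<in> {1..n} \<and> (x::nat) \<noteq> y"
  have ab: "TJ_adj {1..n} ?E r X Y" using assms(1) johnson_as_tj2 by simp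
  note bs = tj_basic[OF ab assms(2)]
  have "X \<union> Y \<subseteq> {1..n}" using ab unfolding TJ_adj_def cliques_def by auto
  hence c1: "card ({1..n} - (X \<union> Y)) = n - (r + 1)" using bs by (simp add: card_Diff_subset)
  have "card C \<le> card ({1..n} - (X \<union> Y)) \<or> card C \<le> card (X \<inter> Y)"
    using clique_bound[OF johnson_as_tj(3) ab assms(2)] assms(4,5) unfolding johnson_as_tj2 by blast
  thus ?thesis using c1 bs assms(3) by linarith
qed


lemma j_facts:
  fixes n r :: nat
  assumes r: "r \<ge> 2" and n: "r + 2 \<le> n"
  defines "X \<equiv> {1..r}" and "Y \<equiv> {2..r+1}" and "W1 \<equiv> insert (r+2) {2..r}"
    and "W2 \<equiv> insert 1 {3..r+1}"
  shows "johnson_adj n r X Y" "johnson_adj n r X W1" "johnson_adj n r Y W1"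
    "johnson_adj n r X W2" "johnson_adj n r Y W2" "\<not> johnson_adj n r W1 W2" "W1 \<noteq> W2"
proof -
  have c: "card X = r" "card Y = r" "card W1 = r" "card W2 = r"
    unfolding X_def Y_def W1_def W2_def using r by simp_all
  have s: "X \<subseteq> {1..n}" "Y \<subseteq> {1..n}" "W1 \<subseteq> {1..n}" "W2 \<subseteq> {1..n}"
    unfolding X_def Y_def W1_def W2_def using r n by auto
  have v: "X \<in> johnson_verts n r" "Y \<in> johnson_verts n r" "W1 \<in> johnson_verts n r"
    "W2 \<in> johnson_verts n r"
    unfolding johnson_verts_def using c s by auto
  have i1: "X \<inter> Y = {2..r}" unfolding X_def Y_def by auto
  have i2: "X \<inter> W1 = {2..r}" unfolding X_def W1_def by auto
  have i3: "Y \<inter> W1 = {2..r}" unfolding Y_def W1_def by auto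
  have i4: "X \<inter> W2 = insert 1 {3..r}" unfolding X_def W2_def using r by auto
  have i5: "Y \<inter> W2 = {3..r+1}" unfolding Y_def W2_def by auto
  have i6: "W1 \<inter> W2 = {3..r}" unfolding W1_def W2_def by auto
  show "johnson_adj n r X Y" "johnson_adj n r X W1" "johnson_adj n r Y W1"
    "johnson_adj n r X W2" "johnson_adj n r Y W2" "\<not> johnson_adj n r W1 W2"
    unfolding johnson_adj_def using v r by (simp_all add: i1 i2 i3 i4 i5 i6)
  show "W1 \<noteq> W2" unfolding W1_def W2_def by auto
qed

theorem theorem4p22:
  fixes n r k :: nat and V :: "'a set" and E :: "'a \<Rightarrow> 'a \<Rightarrow> bool"
  assumes "4 \<le> 2 * r" and "2 * r \<le> n"
    and "k \<ge> 1" and "k > n - r"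
    and "simple_graph V E"
  shows "\<not> graph_iso (TJ_verts V E k) (TJ_adj V E k) (johnson_verts n r) (johnson_adj n r)"
proof
  assume "graph_iso (TJ_verts V E k) (TJ_adj V E k) (johnson_verts n r) (johnson_adj n r)"
  then obtain f where f: "bij_betw f (TJ_verts V E k) (johnson_verts n r)"
    "\<forall>x\<in>TJ_verts V E k. \<forall>y\<in>TJ_verts V E k. TJ_adj V E k x y \<longleftrightarrow> johnson_adj n r (f x) (f y)"
    unfolding graph_iso_def by blast
  let ?TV = "TJ_verts V E k"
  let ?g = "inv_into ?TV f"
  have r2: "r \<ge> 2" and nr: "r + 2 \<le> n" using assms by auto
  define X where "X = {1..r}"
  define Y where "Y = {2..r+1}"
  define W1 where "W1 = insert (r+2) {2..r}"
  define W2 where "W2 = insert 1 {3..r+1}"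
  note jf = j_facts[OF r2 nr, folded X_def Y_def W1_def W2_def]
  have jv: "\<And>Z. johnson_adj n r X Z \<Longrightarrow> Z \<in> johnson_verts n r"
    "\<And>Z. johnson_adj n r Z X \<Longrightarrow> Z \<in> johnson_verts n r"
    unfolding johnson_adj_def by auto
  have gin: "\<And>Z. Z \<in> johnson_verts n r \<Longrightarrow> ?g Z \<in> ?TV \<and> f (?g Z) = Z"
  proof -
    fix Z assume "Z \<in> johnson_verts n r"
    hence "Z \<in> f ` ?TV" using bij_betw_imp_surj_on[OF f(1)] by simp
    thus "?g Z \<in> ?TV \<and> f (?g Z) = Z" by (simp add: inv_into_into f_inv_into_f)
  qed
  have XJ: "X \<in> johnson_verts n r" "Y \<in> johnson_verts n r" "W1 \<in> johnson_verts n r"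
    "W2 \<in> johnson_verts n r" using jf(1,2,4) unfolding johnson_adj_def by auto
  note gX = gin[OF XJ(1)] and gY = gin[OF XJ(2)] and g1 = gin[OF XJ(3)] and g2 = gin[OF XJ(4)]
  have fe: "\<And>P Q. P \<in> ?TV \<Longrightarrow> Q \<in> ?TV \<Longrightarrow> TJ_adj V E k P Q = johnson_adj n r (f P) (f Q)"
    using f(2) by blast
  have ab: "TJ_adj V E k (?g X) (?g Y)" using fe[of "?g X" "?g Y"] gX gY jf(1) by simp
  have n1: "?g W1 \<in> nb (TJ_adj V E k) (?g X) (?g Y)"
    unfolding nb_def using fe[of "?g X" "?g W1"] fe[of "?g Y" "?g W1"] gX gY g1 jf(2,3) by simp
  have n2: "?g W2 \<in> nb (TJ_adj V E k) (?g X) (?g Y)"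
    unfolding nb_def using fe[of "?g X" "?g W2"] fe[of "?g Y" "?g W2"] gX gY g2 jf(4,5) by simp
  have ne: "?g W1 \<noteq> ?g W2"
  proof
    assume "?g W1 = ?g W2"
    hence "f (?g W1) = f (?g W2)" by (rule arg_cong)
    moreover have "f (?g W1) = W1" by (rule conjunct2[OF g1])
    moreover have "f (?g W2) = W2" by (rule conjunct2[OF g2])
    ultimately show False using jf(7) by (rule_tac ccontr) simp
  qed
  have na: "\<not> TJ_adj V E k (?g W1) (?g W2)" using fe[of "?g W1" "?g W2"] g1 g2 jf(6) by simp
  obtain C where C: "C \<subseteq> nb (TJ_adj V E k) (?g X) (?g Y)" "isclq (TJ_adj V E k) C" "card C = k - 1"
    using big_clique[OF assms(5) ab assms(3) n1 n2 ne na] by blast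
  have CT: "C \<subseteq> ?TV" using C(1) unfolding nb_def TJ_adj_def TJ_verts_def by auto
  have inj: "inj_on f C" by (rule inj_on_subset[OF bij_betw_imp_inj_on[OF f(1)] CT])
  have "f ` C \<subseteq> nb (johnson_adj n r) X Y"
  proof
    fix Z assume "Z \<in> f ` C"
    then obtain W where W: "W \<in> C" "Z = f W" by blast
    have "TJ_adj V E k (?g X) W" "TJ_adj V E k (?g Y) W" using C(1) W(1) unfolding nb_def by auto
    moreover have "W \<in> ?TV" using W(1) CT by blast
    ultimately show "Z \<in> nb (johnson_adj n r) X Y" unfolding nb_def
      using fe[of "?g X" W] fe[of "?g Y" W] gX gY W(2) by simp
  qed
  moreover have "isclq (johnson_adj n r) (f ` C)"
    unfolding isclq_def
  proof (intro ballI impI)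
    fix P Q assume P: "P \<in> f ` C" and Q: "Q \<in> f ` C" and PQ: "P \<noteq> Q"
    then obtain p q where "p \<in> C" "q \<in> C" "P = f p" "Q = f q" by blast
    moreover hence "p \<noteq> q" using PQ by blast
    ultimately show "johnson_adj n r P Q" using C(2) CT fe[of p q] unfolding isclq_def by blast
  qed
  ultimately have "card (f ` C) \<le> n - r - 1"
    using johnson_bound[OF jf(1) _ assms(2)] r2 by simp
  hence "k - 1 \<le> n - r - 1" using card_image[OF inj] C(3) by simp
  thus False using assms by linarith
qed

end
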